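(* Let $B$, $C$ be unital $\mathrm{C}^*$-algebras and let $\phi,\psi\colon B\to C$ be surjective $*$-homomorphisms. Assume that $C$ has trivial center. If $c\in C$ satisfies $\phi(b)c=c\psi(b)$ for all $b\in B$, then either $c$ is invertible or $c=0$. *)

theory Defs
  imports Complex_Main
begin

class scaleC =
  fixes scaleC :: "complex \<Rightarrow> 'a \<Rightarrow> 'a"

class cstar_op =
  fixes cstar :: "'a \<Rightarrow> 'a"

class cstar_algebra = real_normed_algebra_1 + banach + scaleC + cstar_op +
  assumes scaleC_add_right: "scaleC a (x + y) = scaleC a x + scaleC a y"
    and scaleC_add_left: "scaleC (a + b) x = scaleC a x + scaleC b x"
    and scaleC_scaleC: "scaleC a (scaleC b x) = scaleC (a * b) x"
    and scaleC_one: "scaleC 1 x = x"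
    and scaleR_scaleC: "scaleR r x = scaleC (complex_of_real r) x"
    and norm_scaleC: "norm (scaleC a x) = cmod a * norm x"
    and mult_scaleC_left: "scaleC a x * y = scaleC a (x * y)"
    and mult_scaleC_right: "x * scaleC a y = scaleC a (x * y)"
    and cstar_cstar: "cstar (cstar x) = x"
    and cstar_add: "cstar (x + y) = cstar x + cstar y"
    and cstar_scaleC: "cstar (scaleC a x) = scaleC (cnj a) (cstar x)"
    and cstar_mult: "cstar (x * y) = cstar y * cstar x"
    and cstar_identity: "norm (cstar x * x) = norm x * norm x"

definition star_hom :: "('a::cstar_algebra \<Rightarrow> 'b::cstar_algebra) \<Rightarrow> bool" where
  "star_hom f \<longleftrightarrow>
     (\<forall>x y. f (x + y) = f x + f y) \<and>
     (\<forall>a x. f (scaleC a x) = scaleC a (f x)) \<and>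
     (\<forall>x y. f (x * y) = f x * f y) \<and>
     (\<forall>x. f (cstar x) = cstar (f x))"

definition center :: "'a::cstar_algebra set" where
  "center = {z. \<forall>x. z * x = x * z}"

definition trivial_center :: "'a::cstar_algebra itself \<Rightarrow> bool" where
  "trivial_center _ \<longleftrightarrow> (center :: 'a set) = {scaleC a 1 | a. True}"

definition invertible_elem :: "'a::cstar_algebra \<Rightarrow> bool" where
  "invertible_elem c \<longleftrightarrow> (\<exists>d. c * d = 1 \<and> d * c = 1)"

end

theory Submission
  imports Defs
begin

lemma cstar_zero: "cstar (0::'a::cstar_algebra) = 0"
proof -
  have "cstar (0::'a) = cstar (0 + 0)" by simp
  also have "\<dots> = cstar 0 + cstar 0" by (rule cstar_add)
  finally show ?thesis by simp
qed

lemma scal_inv: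
  fixes x y :: "'a::cstar_algebra"
  assumes "x * y = scaleC l 1" "l \<noteq> 0"
  shows "scaleC (inverse l) x * y = 1"
  using assms by (simp add: mult_scaleC_left scaleC_scaleC scaleC_one)

lemma scal_inv2:
  fixes x y :: "'a::cstar_algebra"
  assumes "x * y = scaleC l 1" "l \<noteq> 0"
  shows "x * scaleC (inverse l) y = 1"
  using assms by (simp add: mult_scaleC_right scaleC_scaleC scaleC_one)

lemma nonzero_scal:
  fixes x :: "'a::cstar_algebra"
  assumes "cstar x * x = scaleC l 1" "x \<noteq> 0"
  shows "l \<noteq> 0"
proof
  assume "l = 0"
  then have "cstar x * x = scaleC 0 1" using assms by simp
  then have "norm (cstar x * x) = 0" by (simp add: norm_scaleC)
  then have "norm x * norm x = 0" by (simp add: cstar_identity)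
  then show False using assms(2) by simp
qed

theorem lemma3p1:
  fixes \<phi> \<psi> :: "'b::cstar_algebra \<Rightarrow> 'c::cstar_algebra" and c :: 'c
  assumes "star_hom \<phi>" and "surj \<phi>"
    and "star_hom \<psi>" and "surj \<psi>"
    and "trivial_center TYPE('c)"
    and "\<forall>b. \<phi> b * c = c * \<psi> b"
  shows "invertible_elem c \<or> c = 0"
proof (cases "c = 0")
  case True then show ?thesis by simp
next
  case False
  have ps: "\<And>x. \<psi> (cstar x) = cstar (\<psi> x)" and ph: "\<And>x. \<phi> (cstar x) = cstar (\<phi> x)"
    using assms(1,3) unfolding star_hom_def by auto
  have adj: "cstar c * \<phi> b = \<psi> b * cstar c" for b
  proof -
    have "cstar (\<phi> (cstar b) * c) = cstar (c * \<psi> (cstar b))" using assms(6) by simp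
    then show ?thesis by (simp add: cstar_mult ps ph cstar_cstar)
  qed
  have "cstar c * c \<in> center"
    unfolding center_def
  proof (safe)
    fix x
    obtain b where b: "x = \<psi> b" using assms(4) by (metis surjD)
    have "cstar c * c * \<psi> b = cstar c * (\<phi> b * c)" using assms(6) by (simp add: mult.assoc)
    also have "\<dots> = \<psi> b * cstar c * c" using adj by (simp add: mult.assoc[symmetric])
    finally show "cstar c * c * x = x * (cstar c * c)" using b by (simp add: mult.assoc)
  qed
  then obtain l where l: "cstar c * c = scaleC l 1"
    using assms(5) unfolding trivial_center_def by auto
  have "c * cstar c \<in> center"
    unfolding center_def
  proof (safe)
    fix x
    obtain b where b: "x = \<phi> b" using assms(2) by (metis surjD)
    have "c * cstar c * \<phi> b = c * (\<psi> b * cstar c)" using adj by (simp add: mult.assoc)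
    also have "\<dots> = \<phi> b * c * cstar c" using assms(6) by (simp add: mult.assoc[symmetric])
    finally show "c * cstar c * x = x * (c * cstar c)" using b by (simp add: mult.assoc)
  qed
  then obtain m where m: "cstar (cstar c) * cstar c = scaleC m 1"
    using assms(5) unfolding trivial_center_def by (auto simp: cstar_cstar)
  have c2: "cstar c \<noteq> 0" using False by (metis cstar_cstar cstar_zero)
  have l0: "l \<noteq> 0" using nonzero_scal[OF l False] .
  have m0: "m \<noteq> 0" using nonzero_scal[OF m c2] .
  define d1 where "d1 = scaleC (inverse l) (cstar c)"
  define d2 where "d2 = scaleC (inverse m) (cstar c)"
  have 1: "d1 * c = 1" unfolding d1_def using scal_inv[OF l l0] .
  have 2: "c * d2 = 1" unfolding d2_def using scal_inv2[OF m[unfolded cstar_cstar] m0] .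
  have "d1 = d2"
  proof -
    have "d1 = d1 * (c * d2)" using 2 by simp
    also have "\<dots> = d2" using 1 by (simp add: mult.assoc[symmetric])
    finally show ?thesis .
  qed
  then show ?thesis unfolding invertible_elem_def using 1 2 by auto
qed

end
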